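(* For all $n\in\mathbb{N}$, $a_{n,1-n}=a_{n,n-1}=0$, and for all $j\in\mathbb{N}$, $a_{2j,1}=a_{2j,-1}=0$. Equivalently, the generating functions $A_k(x)=\sum_{n\ge\lfloor (k+1)/2\rfloor}\Theta^na_{n,k-n}x^n$ satisfy $A_{2j-1}\equiv0$ for all $j\in\mathbb{N}$.
   Context: Let $\varepsilon\in\{\pm1\}$, $b\in\mathbb{R}\setminus\{0\}$, $a\in\mathbb{C}$, and consider the degenerate third Painlevé equation $u''=\frac{(u')^2}{u}-\frac{u'}{\tau}+\frac1\tau(-8\varepsilon u^2+2ab)+\frac{b^2}{u}$. Put $\theta(\tau)=3^{3/2}(\varepsilon b)^{1/3}\tau^{2/3}$, $\Theta=3^{3/4}(\varepsilon b)^{1/6}$ (so $\theta=\Theta^2\tau^{2/3}$) and $\alpha=2i\sqrt3\,a$. Let $\varkappa\in\mathbb{C}$ with $|\mathrm{Re}\,\varkappa|<1/2$ and $w=\tau^{2\varkappa/3}e^{i\theta(\tau)}$. Consider the (general-solution) asymptotic expansion $$u(\tau)=\frac{\varepsilon(\varepsilon b)^{2/3}}{2}\tau^{1/3}\Big(1+\sum_{k=1}^{\infty}\tau^{-k/3}\sum_{j=-k}^{k}a_{k,j}w^j\Big),\qquad \mathrm{Re}\,\tau\to+\infty,\ |\mathrm{Im}\,\theta(\tau)|<\delta,$$ where $a_{1,0}=0$, $a_{1,1}a_{1,-1}=-\dfrac{i\varkappa}{\sqrt3(\varepsilon b)^{1/3}}$ (equivalently $\Theta^2a_{1,1}a_{1,-1}=-3i\varkappa$),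 and all remaining coefficients $a_{k,j}$ are uniquely determined by $a_{1,1},a_{1,-1},a,b,\varepsilon$ via formal substitution of the expansion into the equation; set $a_{0,0}=1$. *)

theory Defs
  imports Complex_Main "HOL-Computational_Algebra.Formal_Power_Series"
begin

text \<open>Formal bi-series in s = tau^(1/3) and w = tau^(2 kappa/3) e^(i theta).
  A series f with top degree p0 has coefficient f n j in front of s^(p0 - n) w^j
  (n a natural number, j an integer); all series used satisfy f n j = 0 for |j| > n.\<close>

type_synonym fser = "nat \<Rightarrow> int \<Rightarrow> complex"

text \<open>Product of formal series (valid when the first factor satisfies f m i = 0 for |i| > m);
  the top degrees add.\<close>
definition fconv :: "fser \<Rightarrow> fser \<Rightarrow> fser" where
  "fconv f g n j = (\<Sum>m\<in>{0..n}. \<Sum>i\<in>{- int m..int m}. f m i * g (n - m) (j - i))"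

text \<open>The Euler operator D = tau d/dtau on a series with top degree p0; the result has top
  degree p0 + 2.  Since s = tau^(1/3), tau*theta' = (2/3) Theta^2 s^2:
  D (s^p w^j) = ((p + 2 j kappa)/3) s^p w^j + (2 i/3) Theta^2 j s^(p+2) w^j.\<close>
definition fD :: "complex \<Rightarrow> complex \<Rightarrow> int \<Rightarrow> fser \<Rightarrow> fser" where
  "fD \<kappa> \<Theta> p0 f n j =
     (if 2 \<le> n then ((of_int (p0 - int (n - 2)) + 2 * of_int j * \<kappa>) / 3) * f (n - 2) j else 0)
     + (2 * \<i> / 3) * \<Theta>\<^sup>2 * of_int j * f n j"

text \<open>The normalised ansatz v = 1 + sum_{k>=1} tau^(-k/3) sum_{|j|<=k} a_{k,j} w^j,
  i.e. v has top degree 1 and coefficient a k j at s^(1-k) w^j (with a 0 0 = 1).\<close>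
definition vser :: "(nat \<Rightarrow> int \<Rightarrow> complex) \<Rightarrow> fser" where
  "vser a k j = (if \<bar>j\<bar> \<le> int k then a k j else 0)"

text \<open>With u = c v, c = eps (eps b)^(2/3) / 2 = eps beta^2/2 (beta a cube root of eps b),
  multiplying the degenerate Painleve III equation by tau^2 u gives
  u D^2 u - (D u)^2 + 8 eps s^3 u^3 - 2 a b s^3 u - b^2 s^6 = 0.
  The coefficient of s^(6-n) w^j of the left-hand side:\<close>
definition PIII_residual ::
  "real \<Rightarrow> real \<Rightarrow> complex \<Rightarrow> complex \<Rightarrow> complex \<Rightarrow> complex \<Rightarrow> (nat \<Rightarrow> int \<Rightarrow> complex) \<Rightarrow> fser" where
  "PIII_residual \<epsilon> b a \<beta> \<kappa> \<Theta> acoef n j =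
    (let c = of_real \<epsilon> * \<beta>\<^sup>2 / 2;
         U = (\<lambda>k i. c * vser acoef k i);
         DU = fD \<kappa> \<Theta> 1 U;
         DDU = fD \<kappa> \<Theta> 3 DU
     in fconv U DDU n j - fconv DU DU n j
        + 8 * of_real \<epsilon> * fconv U (fconv U U) n j
        - (if 2 \<le> n then 2 * a * of_real b * U (n - 2) j else 0)
        - (if n = 0 \<and> j = 0 then (of_real b)\<^sup>2 else 0))"

definition A_gen :: "complex \<Rightarrow> (nat \<Rightarrow> int \<Rightarrow> complex) \<Rightarrow> nat \<Rightarrow> complex fps" where
  "A_gen \<Theta> acoef k = Abs_fps (\<lambda>n. if (k + 1) div 2 \<le> n then \<Theta> ^ n * acoef n (int k - int n) else 0)"

end

theory Submission
  imports Defs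
begin


definition supp_ok :: "fser \<Rightarrow> bool" where
  "supp_ok f \<longleftrightarrow> (\<forall>m i. int m < \<bar>i\<bar> \<longrightarrow> f m i = 0)"

definition good :: "nat \<Rightarrow> fser \<Rightarrow> bool" where
  "good n f \<longleftrightarrow> (\<forall>m i. m < n \<longrightarrow> odd (int m + i) \<longrightarrow> f m i = 0)"

definition fe :: "fser \<Rightarrow> fser" where
  "fe f m i = (if even (int m + i) then f m i else 0)"

lemma supp_okD: "supp_ok f \<Longrightarrow> int m < \<bar>i\<bar> \<Longrightarrow> f m i = 0"
  by (simp add: supp_ok_def)

lemma goodD: "good n f \<Longrightarrow> m < n \<Longrightarrow> odd (int m + i) \<Longrightarrow> f m i = 0"
  by (simp add: good_def)

lemma supp_ok_fD: "supp_ok f \<Longrightarrow> supp_ok (fD \<kappa> \<Theta> p f)"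
  unfolding supp_ok_def fD_def by auto

lemma good_fD: "good n f \<Longrightarrow> good n (fD \<kappa> \<Theta> p f)"
  unfolding good_def fD_def
proof (intro allI impI)
  fix m i assume H: "\<forall>m i. m < n \<longrightarrow> odd (int m + i) \<longrightarrow> f m i = 0" and "m < n" "odd (int m + i)"
  have "2 \<le> m \<Longrightarrow> f (m - 2) i = 0"
  proof -
    assume m2: "2 \<le> m"
    have "odd (int (m - 2) + i)" using \<open>odd (int m + i)\<close> m2 by (simp add: of_nat_diff)
    then show ?thesis using H \<open>m < n\<close> by auto
  qed
  then show "(if 2 \<le> m then (of_int (p - int (m - 2)) + 2 * of_int i * \<kappa>) / 3 * f (m - 2) i else 0) +
           2 * \<i> / 3 * \<Theta>\<^sup>2 * of_int i * f m i = 0"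
    using H \<open>m < n\<close> \<open>odd (int m + i)\<close> by auto
qed

lemma supp_ok_fconv:
  assumes "supp_ok f" "supp_ok g" shows "supp_ok (fconv f g)"
  unfolding supp_ok_def fconv_def
proof (intro allI impI)
  fix n j assume nj: "int n < \<bar>j\<bar>"
  show "(\<Sum>m = 0..n. \<Sum>i = - int m..int m. f m i * g (n - m) (j - i)) = 0"
  proof (intro sum.neutral ballI)
    fix m i assume m: "m \<in> {0..n}" and i: "i \<in> {- int m..int m}"
    have "int (n - m) < \<bar>j - i\<bar>" using m i nj by auto
    then show "f m i * g (n - m) (j - i) = 0" using supp_okD[OF assms(2)] by simp
  qed
qed

lemma good_fconv:
  assumes "good n f" "good n g" shows "good n (fconv f g)"
  unfolding good_def fconv_def
proof (intro allI impI)
  fix L j assume L: "L < n" and o: "odd (int L + j)"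
  show "(\<Sum>m = 0..L. \<Sum>i = - int m..int m. f m i * g (L - m) (j - i)) = 0"
  proof (intro sum.neutral ballI)
    fix m i assume m: "m \<in> {0..L}" and i: "i \<in> {- int m..int m}"
    show "f m i * g (L - m) (j - i) = 0"
    proof (cases "odd (int m + i)")
      case True then show ?thesis using goodD[OF assms(1)] m L by simp
    next
      case False
      then have "odd (int (L - m) + (j - i))" using o m by (auto simp: of_nat_diff)
      then show ?thesis using goodD[OF assms(2)] m L by simp
    qed
  qed
qed



lemma inner_swap:
  assumes sf: "supp_ok f" and sg: "supp_ok g" and o: "odd (int L + int m' + j)"
  shows "(\<Sum>i\<in>{- int L..int L}. (if odd (int L + i) then f L i else 0) * g m' (j - i))
       = (\<Sum>i\<in>{- int m'..int m'}. fe g m' i * f L (j - i))"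
proof -
  define B where "B = int L + int m' + \<bar>j\<bar>"
  define F where "F = (\<lambda>i. (if odd (int L + i) then f L i else 0) * g m' (j - i))"
  define G where "G = (\<lambda>i. fe g m' i * f L (j - i))"
  have FG: "F i = G (j - i)" for i
    using o by (auto simp: F_def G_def fe_def)
  have L1: "(\<Sum>i\<in>{- int L..int L}. F i) = (\<Sum>i\<in>{-B..B}. F i)"
    by (rule sum.mono_neutral_left) (auto simp: B_def F_def supp_okD[OF sf])
  have R1: "(\<Sum>i\<in>{- int m'..int m'}. G i) = (\<Sum>i\<in>(\<lambda>i. j - i) ` {-B..B}. G i)"
  proof (rule sum.mono_neutral_left)
    show "finite ((\<lambda>i. j - i) ` {- B..B})" by simp
    show "{- int m'..int m'} \<subseteq> (\<lambda>i. j - i) ` {- B..B}"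
    proof
      fix x assume x: "x \<in> {- int m'..int m'}"
      have "j - x \<in> {-B..B}" using x by (auto simp: B_def)
      moreover have "x = j - (j - x)" by simp
      ultimately show "x \<in> (\<lambda>i. j - i) ` {- B..B}" by blast
    qed
    show "\<forall>i\<in>(\<lambda>i. j - i) ` {- B..B} - {- int m'..int m'}. G i = 0"
      by (auto simp: G_def fe_def supp_okD[OF sg])
  qed
  have R2: "(\<Sum>i\<in>(\<lambda>i. j - i) ` {-B..B}. G i) = (\<Sum>i\<in>{-B..B}. G (j - i))"
    by (subst sum.reindex) (auto simp: inj_on_def)
  show ?thesis
    using L1 R1 R2 FG unfolding F_def[symmetric] G_def[symmetric] by simp
qed

lemma key:
  assumes sf: "supp_ok f" and sg: "supp_ok g" and gf: "good n f" and gg: "good n g"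
    and nN: "n \<le> N" and o: "odd (int N + j)"
  shows "fconv f g N j = (\<Sum>m=0..N-n. \<Sum>i=- int m..int m. fe f m i * g (N-m) (j-i) + fe g m i * f (N-m) (j-i))"
proof -
  define fo where "fo = (\<lambda>m i. if odd (int m + i) then f m i else 0)"
  have split: "f m i = fe f m i + fo m i" for m i by (simp add: fe_def fo_def)
  have "fconv f g N j = (\<Sum>m=0..N. \<Sum>i=- int m..int m. fe f m i * g (N-m) (j-i))
       + (\<Sum>m=0..N. \<Sum>i=- int m..int m. fo m i * g (N-m) (j-i))"
    unfolding fconv_def by (subst split) (simp add: distrib_right sum.distrib)
  also have "(\<Sum>m=0..N. \<Sum>i=- int m..int m. fe f m i * g (N-m) (j-i))
      = (\<Sum>m=0..N-n. \<Sum>i=- int m..int m. fe f m i * g (N-m) (j-i))"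
  proof (rule sum.mono_neutral_right)
    show "\<forall>m\<in>{0..N} - {0..N - n}. (\<Sum>i = - int m..int m. fe f m i * g (N - m) (j - i)) = 0"
    proof (intro ballI sum.neutral)
      fix m i assume m: "m \<in> {0..N} - {0..N - n}" and i: "i \<in> {- int m..int m}"
      show "fe f m i * g (N - m) (j - i) = 0"
      proof (cases "even (int m + i)")
        case True
        then have "odd (int (N - m) + (j - i))" using o m by (auto simp: of_nat_diff)
        moreover have "N - m < n" using m nN by auto
        ultimately show ?thesis using goodD[OF gg] by simp
      qed (simp add: fe_def)
    qed
  qed auto
  also have "(\<Sum>m=0..N. \<Sum>i=- int m..int m. fo m i * g (N-m) (j-i))
      = (\<Sum>m=n..N. \<Sum>i=- int m..int m. fo m i * g (N-m) (j-i))"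
  proof (rule sum.mono_neutral_right)
    show "\<forall>m\<in>{0..N} - {n..N}. (\<Sum>i = - int m..int m. fo m i * g (N - m) (j - i)) = 0"
      by (auto intro!: sum.neutral simp: fo_def goodD[OF gf])
  qed auto
  also have "\<dots> = (\<Sum>m=0..N-n. \<Sum>i=- int (N-m)..int (N-m). fo (N-m) i * g m (j-i))"
    by (rule sum.reindex_bij_witness[of _ "\<lambda>m. N - m" "\<lambda>m. N - m"]) (use nN in auto)
  also have "\<dots> = (\<Sum>m=0..N-n. \<Sum>i=- int m..int m. fe g m i * f (N-m) (j-i))"
  proof (rule sum.cong[OF refl])
    fix m assume m: "m \<in> {0..N-n}"
    have "odd (int (N - m) + int m + j)" using o m nN by (simp add: of_nat_diff)
    then show "(\<Sum>i=- int (N-m)..int (N-m). fo (N-m) i * g m (j-i)) = (\<Sum>i=- int m..int m. fe g m i * f (N-m) (j-i))"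
      unfolding fo_def by (rule inner_swap[OF sf sg])
  qed
  finally show ?thesis by (simp add: sum.distrib)
qed



locale setting =
  fixes \<epsilon> b :: real and a \<beta> \<Theta> \<kappa> :: complex and acoef :: "nat \<Rightarrow> int \<Rightarrow> complex"
  assumes eps: "\<epsilon> = 1 \<or> \<epsilon> = -1"
    and b: "b \<noteq> 0"
    and beta: "\<beta> ^ 3 = of_real (\<epsilon> * b)"
    and Theta: "\<Theta>\<^sup>2 = 3 * of_real (sqrt 3) * \<beta>"
    and a00: "acoef 0 0 = 1"
    and a10: "acoef 1 0 = 0"
    and a11: "\<Theta>\<^sup>2 * acoef 1 1 * acoef 1 (-1) = - 3 * \<i> * \<kappa>"
    and formal: "\<forall>n j. PIII_residual \<epsilon> b a \<beta> \<kappa> \<Theta> acoef n j = 0"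
begin

definition "c = of_real \<epsilon> * \<beta>\<^sup>2 / 2"
definition "U = (\<lambda>k i. c * vser acoef k i)"
definition "DU = fD \<kappa> \<Theta> 1 U"
definition "DDU = fD \<kappa> \<Theta> 3 DU"
definition "V = fconv U U"

lemma R_eq: "PIII_residual \<epsilon> b a \<beta> \<kappa> \<Theta> acoef n j =
   fconv U DDU n j - fconv DU DU n j + 8 * of_real \<epsilon> * fconv U V n j
   - (if 2 \<le> n then 2 * a * of_real b * U (n - 2) j else 0)
   - (if n = 0 \<and> j = 0 then (of_real b)\<^sup>2 else 0)"
  unfolding PIII_residual_def Let_def c_def[symmetric] U_def[symmetric] DU_def[symmetric]
    DDU_def[symmetric] V_def[symmetric] by (simp add: U_def)

lemma R0: "fconv U DDU n j - fconv DU DU n j + 8 * of_real \<epsilon> * fconv U V n j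
   - (if 2 \<le> n then 2 * a * of_real b * U (n - 2) j else 0)
   - (if n = 0 \<and> j = 0 then (of_real b)\<^sup>2 else 0) = 0"
  using formal R_eq by simp

lemma eps2: "(of_real \<epsilon> :: complex)^2 = 1" using eps by auto

lemma beta_nz: "\<beta> \<noteq> 0" using beta b eps by auto

lemma c_nz: "c \<noteq> 0" using beta_nz eps by (auto simp: c_def)

lemma T2: "(\<Theta>\<^sup>2)\<^sup>2 = 54 * of_real \<epsilon> * c"
proof -
  have s: "(of_real (sqrt 3) :: complex)^2 = 3"
    by (metis of_real_numeral of_real_power real_sqrt_pow2 zero_le_numeral)
  have "(\<Theta>\<^sup>2)\<^sup>2 = 9 * (of_real (sqrt 3))^2 * \<beta>^2" unfolding Theta by (simp add: power_mult_distrib)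
  also have "\<dots> = 27 * \<beta>^2" using s by simp
  also have "\<dots> = 54 * of_real \<epsilon> * c" using eps2 unfolding c_def by (simp add: power2_eq_square)
  finally show ?thesis .
qed

lemma supp_U: "supp_ok U" by (auto simp: supp_ok_def U_def vser_def)
lemma supp_DU: "supp_ok DU" unfolding DU_def by (rule supp_ok_fD[OF supp_U])
lemma supp_DDU: "supp_ok DDU" unfolding DDU_def by (rule supp_ok_fD[OF supp_DU])
lemma supp_V: "supp_ok V" unfolding V_def by (rule supp_ok_fconv[OF supp_U supp_U])

lemma U00: "U 0 0 = c" by (simp add: U_def vser_def a00)
lemma U10: "U 1 0 = 0" using a10 by (simp add: U_def vser_def)

context fixes n assumes gU: "good n U"
begin
lemma gDU: "good n DU" unfolding DU_def by (rule good_fD[OF gU])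
lemma gDDU: "good n DDU" unfolding DDU_def by (rule good_fD[OF gDU])
lemma gV: "good n V" unfolding V_def by (rule good_fconv[OF gU gU])
end

lemma DDU00: "DDU 0 0 = 0" by (simp add: DDU_def fD_def)
lemma DU00: "DU 0 0 = 0" by (simp add: DU_def fD_def)
lemma V00: "V 0 0 = c^2" by (simp add: V_def fconv_def U00 power2_eq_square)

lemma level_nonres:
  assumes gU: "good n U" and n1: "1 \<le> n" and o: "odd (int n + j)" and j: "j\<^sup>2 \<noteq> 1"
  shows "U n j = 0"
proof -
  have DU_n: "DU n j = 2 * \<i> / 3 * \<Theta>\<^sup>2 * of_int j * U n j"
  proof -
    have "2 \<le> n \<Longrightarrow> U (n - 2) j = 0"
      using goodD[OF gU, of "n-2" j] o by (simp add: of_nat_diff)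
    then show ?thesis by (simp add: DU_def fD_def)
  qed
  have DDU_n: "DDU n j = 2 * \<i> / 3 * \<Theta>\<^sup>2 * of_int j * DU n j"
  proof -
    have "2 \<le> n \<Longrightarrow> DU (n - 2) j = 0"
      using goodD[OF gDU[OF gU], of "n-2" j] o by (simp add: of_nat_diff)
    then show ?thesis by (simp add: DDU_def fD_def)
  qed
  have Un2: "2 \<le> n \<Longrightarrow> U (n - 2) j = 0"
      using goodD[OF gU, of "n-2" j] o by (simp add: of_nat_diff)
  have V_n: "V n j = 2 * c * U n j"
    unfolding V_def by (subst key[OF supp_U supp_U gU gU order_refl o]) (simp add: fe_def U00)
  have e1: "fconv U DDU n j = c * DDU n j"
    by (subst key[OF supp_U supp_DDU gU gDDU[OF gU] order_refl o]) (simp add: fe_def U00 DDU00)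
  have e2: "fconv DU DU n j = 0"
    by (subst key[OF supp_DU supp_DU gDU[OF gU] gDU[OF gU] order_refl o]) (simp add: fe_def DU00)
  have e3: "fconv U V n j = c * V n j + c^2 * U n j"
    by (subst key[OF supp_U supp_V gU gV[OF gU] order_refl o]) (simp add: fe_def U00 V00)
  have "n \<noteq> 0" using n1 by simp
  have "c * U n j * ((2 * \<i> / 3 * \<Theta>\<^sup>2 * of_int j)^2 + 24 * of_real \<epsilon> * c) = 0"
    using R0[of n j] e1 e2 e3 V_n DDU_n DU_n Un2 \<open>n \<noteq> 0\<close>
    by (simp add: algebra_simps power2_eq_square)
  moreover have "(2 * \<i> / 3 * \<Theta>\<^sup>2 * of_int j)^2 + 24 * of_real \<epsilon> * c = 24 * of_real \<epsilon> * c * (1 - of_int (j^2))"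
  proof -
    have "(2 * \<i> / 3 * \<Theta>\<^sup>2 * of_int j)^2 = - 4/9 * (\<Theta>\<^sup>2)\<^sup>2 * of_int (j^2)"
      by (simp add: power_mult_distrib power_divide)
    then show ?thesis unfolding T2 by (simp add: algebra_simps)
  qed
  moreover have "(1::complex) - of_int (j^2) \<noteq> 0"
  proof
    assume "(1::complex) - of_int (j^2) = 0"
    then have "(of_int (j^2) :: complex) = of_int 1" by simp
    then have "j^2 = 1" using of_int_eq_iff by blast
    with j show False by simp
  qed
  ultimately show ?thesis using c_nz eps by auto
qed

end


lemma int_m1_1: "{-1..1::int} = {-1,0,1}" by auto
lemma int_m2_2: "{-2..2::int} = {-2,-1,0,1,2}" by auto
lemma nat_0_2: "{0..2::nat} = {0,1,2}" by auto
lemma nat_0_1: "{0..1::nat} = {0,1}" by auto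

context setting begin

lemma U0: "U 0 j = (if j = 0 then c else 0)" by (auto simp: U_def vser_def a00)
lemma U1: "U 1 j = (if j = 1 then c * acoef 1 1 else if j = -1 then c * acoef 1 (-1) else 0)"
  using a10 by (cases "j = 0") (auto simp: U_def vser_def)
lemma U2: "U 2 j = (if \<bar>j\<bar> \<le> 2 then c * acoef 2 j else 0)" by (auto simp: U_def vser_def)

lemma U1': "U (Suc 0) j = (if j = 1 then c * acoef 1 1 else if j = -1 then c * acoef 1 (-1) else 0)"
  using U1 by simp
lemma T4: "\<Theta>^4 = 54 * of_real \<epsilon> * c" using T2 by (simp add: power_mult[symmetric])

lemmas lowsimps = U0 U1 U1'  U2 int_m1_1 int_m2_2 nat_0_2 nat_0_1 fconv_def DDU_def DU_def fD_def V_def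

lemma isq: "\<i> * \<i> = -1" by simp
lemma ii: "\<i> * (\<i> * z) = - z" by (simp add: mult.assoc[symmetric])

lemma lev2_p2: "acoef 2 2 = (acoef 1 1)^2 / 3"
proof -
  have E: "c * (16 * (\<i> * (\<Theta>\<^sup>2 * (\<i> * (\<Theta>\<^sup>2 * (c * acoef 2 2)))))) / 9 +
     8 * complex_of_real \<epsilon> *
     (c *
      (2 * (c * (c * acoef 2 2)) +
       c * acoef 1 1 * (c * acoef 1 1)) +
      (c * acoef 1 1 * (2 * (c * (c * acoef 1 1))) +
       c * acoef 2 2 * (c * c))) = 0"
    using R0[of 2 2] by (simp add: lowsimps)
  have "c^3 * of_real \<epsilon> * (24 * (acoef 1 1)^2 - 72 * acoef 2 2) = 0"
    using E T2 isq by algebra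
  then show ?thesis using c_nz eps by auto
qed

end

context setting begin

lemma lev2_m2: "acoef 2 (-2) = (acoef 1 (-1))^2 / 3"
proof -
  note lowsimps[simp]
  note E = R0[of 2 "-2", simplified, unfolded One_nat_def[symmetric]]
  have "c^3 * of_real \<epsilon> * (24 * (acoef 1 (-1))^2 - 72 * acoef 2 (-2)) = 0"
    using E T2 T4 isq by algebra
  then show ?thesis using c_nz eps by auto
qed

lemma lev2_0: "24 * c^3 * of_real \<epsilon> * acoef 2 0 = 2 * c * a * of_real b + 48 * c^3 * of_real \<epsilon> * acoef 1 1 * acoef 1 (-1)"
proof -
  note lowsimps[simp]
  note E = R0[of 2 0, simplified, unfolded One_nat_def[symmetric]]
  show ?thesis
    using E T2 T4 isq by algebra
qed

lemma V11: "V 1 1 = 2 * c^2 * acoef 1 1" by (simp add: lowsimps power2_eq_square)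
lemma V1m1: "V 1 (-1) = 2 * c^2 * acoef 1 (-1)" by (simp add: lowsimps power2_eq_square)
lemma V20: "V 2 0 = 2 * c^2 * acoef 2 0 + 2 * c^2 * acoef 1 1 * acoef 1 (-1)" by (simp add: lowsimps power2_eq_square)
lemma V22: "V 2 2 = 2 * c^2 * acoef 2 2 + c^2 * (acoef 1 1)^2" by (simp add: lowsimps power2_eq_square)
lemma V2m2: "V 2 (-2) = 2 * c^2 * acoef 2 (-2) + c^2 * (acoef 1 (-1))^2" by (simp add: lowsimps power2_eq_square)

end

context setting begin

lemma Vk: "good n U \<Longrightarrow> n \<le> N \<Longrightarrow> odd (int N + j) \<Longrightarrow>
   V N j = (\<Sum>m=0..N-n. \<Sum>i=- int m..int m. 2 * (fe U m i * U (N-m) (j-i)))"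
  unfolding V_def by (subst key[OF supp_U supp_U]) (auto simp: sum_distrib_left)

context fixes t assumes et: "even t" and gU: "good (t+2) U"
begin

lemma zt: "odd j \<Longrightarrow> U t j = 0" using goodD[OF gU, of t j] et by simp
lemma zt1: "even j \<Longrightarrow> U (Suc t) j = 0" using goodD[OF gU, of "Suc t" j] et by simp
lemma ztm2: "odd j \<Longrightarrow> U (t - 2) j = 0"
proof -
  assume j: "odd j"
  show ?thesis
  proof (cases "t \<ge> 2")
    case True then show ?thesis using goodD[OF gU, of "t-2" j] et j by (simp add: of_nat_diff)
  next
    case False then have "t - 2 = 0" by simp
    then show ?thesis using j U0 by auto
  qed
qed

lemma V2: "odd j \<Longrightarrow> V (t+2) j = 2 * c * U (t+2) j"
  by (subst Vk[OF gU]) (auto simp: fe_def U0 et)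

lemma V3: "even j \<Longrightarrow> V (t+3) j = 2 * c * U (t+3) j + 2 * c * acoef 1 1 * U (t+2) (j - 1) + 2 * c * acoef 1 (-1) * U (t+2) (j + 1)"
  apply (subst Vk[OF gU])
  apply (auto simp: et)[2]
  apply (simp add: fe_def U0 U1 U1' int_m1_1 nat_0_1)
  done

lemma V4: "odd j \<Longrightarrow> V (t+4) j = 2 * c * U (t+4) j + 2 * c * acoef 1 1 * U (t+3) (j - 1) + 2 * c * acoef 1 (-1) * U (t+3) (j + 1)
   + 2 * c * acoef 2 0 * U (t+2) j + 2 * c * acoef 2 2 * U (t+2) (j - 2) + 2 * c * acoef 2 (-2) * U (t+2) (j + 2)"
  apply (subst Vk[OF gU])
  apply (auto simp: et)[2]
  apply (simp add: fe_def U0 U1 U1' U2 int_m1_1 int_m2_2 nat_0_2 algebra_simps)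
  done

lemma U3z: "U (t+2) 3 = 0" "U (t+2) (-3) = 0"
  using level_nonres[OF gU] et by auto

lemma lvl: "t + 2 = Suc (Suc t)" "t + 3 = Suc (Suc (Suc t))" "t + 4 = Suc (Suc (Suc (Suc t)))" by auto

lemma ztm1: "Suc 0 \<le> t \<Longrightarrow> even j \<Longrightarrow> U (t - Suc 0) j = 0"
  using goodD[OF gU, of "t-1" j] et by (simp add: of_nat_diff)

lemma ztm2': "odd j \<Longrightarrow> U (t - Suc (Suc 0)) j = 0" using ztm2 by (simp add: numeral_2_eq_2)

lemmas hisimps = V2[unfolded lvl] V3[unfolded lvl] V4[unfolded lvl] zt zt1 ztm2 ztm2' ztm1 U3z[unfolded lvl] fe_def U0 U1 U1' U2 int_m1_1 int_m2_2 nat_0_2 nat_0_1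
   DDU_def DU_def fD_def V00 V11 V1m1 V20 V22 V2m2 et lvl
   V11[unfolded One_nat_def] V1m1[unfolded One_nat_def]

lemma eq30: "of_real \<epsilon> * c^2 * (U (Suc (Suc (Suc t))) (0) - 2 * (acoef 1 1 * U (Suc (Suc t)) (-1) + acoef 1 (-1) * U (Suc (Suc t)) 1)) = 0"
proof -
  have p1: "t+2 \<le> t+3" by simp
  have p2: "odd (int (t+3) + 0)" using et by simp
  note k1 = key[OF supp_U supp_DDU gU gDDU[OF gU] p1 p2]
  note k2 = key[OF supp_DU supp_DU gDU[OF gU] gDU[OF gU] p1 p2]
  note k3 = key[OF supp_U supp_V gU gV[OF gU] p1 p2]
  note R = R0[of "t+3" "0"]
  note X0 = R[unfolded k1 k2 k3]
  note hisimps[simp] if_cong[cong]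
  note X = X0[simplified, unfolded One_nat_def[symmetric]]
  show ?thesis using X T2 T4 isq by algebra
qed

lemma eq32: "of_real \<epsilon> * c^2 * (3 * U (Suc (Suc (Suc t))) (2) - 2 * acoef 1 1 * U (Suc (Suc t)) 1) = 0"
proof -
  have p1: "t+2 \<le> t+3" by simp
  have p2: "odd (int (t+3) + 2)" using et by simp
  note k1 = key[OF supp_U supp_DDU gU gDDU[OF gU] p1 p2]
  note k2 = key[OF supp_DU supp_DU gDU[OF gU] gDU[OF gU] p1 p2]
  note k3 = key[OF supp_U supp_V gU gV[OF gU] p1 p2]
  note R = R0[of "t+3" "2"]
  note X0 = R[unfolded k1 k2 k3]
  note hisimps[simp] if_cong[cong]
  note X = X0[simplified, unfolded One_nat_def[symmetric]]
  show ?thesis using X T2 T4 isq by algebra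
qed

lemma eq3m2: "of_real \<epsilon> * c^2 * (3 * U (Suc (Suc (Suc t))) (-2) - 2 * acoef 1 (-1) * U (Suc (Suc t)) (-1)) = 0"
proof -
  have p1: "t+2 \<le> t+3" by simp
  have p2: "odd (int (t+3) + -2)" using et by simp
  note k1 = key[OF supp_U supp_DDU gU gDDU[OF gU] p1 p2]
  note k2 = key[OF supp_DU supp_DU gDU[OF gU] gDU[OF gU] p1 p2]
  note k3 = key[OF supp_U supp_V gU gV[OF gU] p1 p2]
  note R = R0[of "t+3" "-2"]
  note X0 = R[unfolded k1 k2 k3]
  note hisimps[simp] if_cong[cong]
  note X = X0[simplified, unfolded One_nat_def[symmetric]]
  show ?thesis using X T2 T4 isq by algebra
qed

lemma epsc_nz: "of_real \<epsilon> * c^2 \<noteq> 0" using c_nz eps by auto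

lemma s30: "U (Suc (Suc (Suc t))) (0) = 2 * (acoef 1 1 * U (Suc (Suc t)) (-1) + acoef 1 (-1) * U (Suc (Suc t)) 1)"
  using eq30 epsc_nz by simp
lemma s32: "U (Suc (Suc (Suc t))) (2) = 2/3 * acoef 1 1 * U (Suc (Suc t)) 1"
proof -
  have "3 * U (Suc (Suc (Suc t))) (2) = 2 * acoef 1 1 * U (Suc (Suc t)) 1" using eq32 epsc_nz by simp
  then show ?thesis by (simp add: field_simps mult.commute)
qed
lemma s3m2: "U (Suc (Suc (Suc t))) (-2) = 2/3 * acoef 1 (-1) * U (Suc (Suc t)) (-1)"
proof -
  have "3 * U (Suc (Suc (Suc t))) (-2) = 2 * acoef 1 (-1) * U (Suc (Suc t)) (-1)" using eq3m2 epsc_nz by simp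
  then show ?thesis by (simp add: field_simps mult.commute)
qed

lemma eq41: "of_real \<epsilon> * c^2 * (4/9 * \<i> * c * \<Theta>\<^sup>2 * (- 1 - of_nat t - 2 * \<kappa>) * U (Suc (Suc t)) 1 + 16 * c^2 * of_real \<epsilon> * (acoef 1 1)^2 * U (Suc (Suc t)) (-1)) = 0"
proof -
  have p1: "t+2 \<le> t+4" by simp
  have p2: "odd (int (t+4) + 1)" using et by simp
  note k1 = key[OF supp_U supp_DDU gU gDDU[OF gU] p1 p2]
  note k2 = key[OF supp_DU supp_DU gDU[OF gU] gDU[OF gU] p1 p2]
  note k3 = key[OF supp_U supp_V gU gV[OF gU] p1 p2]
  note R = R0[of "t+4" "1"]
  note X0 = R[unfolded k1 k2 k3]
  note hisimps[simp] if_cong[cong]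
  note X1 = X0[simplified, unfolded One_nat_def[symmetric]]
  note X = X1[unfolded s30 s32 s3m2 lev2_p2 lev2_m2]
  show ?thesis using X T2 T4 isq a11 lev2_0 by algebra
qed

lemma eq4m1: "of_real \<epsilon> * c^2 * (4/9 * \<i> * c * \<Theta>\<^sup>2 * (1 + of_nat t - 2 * \<kappa>) * U (Suc (Suc t)) (-1) + 16 * c^2 * of_real \<epsilon> * (acoef 1 (-1))^2 * U (Suc (Suc t)) 1) = 0"
proof -
  have p1: "t+2 \<le> t+4" by simp
  have p2: "odd (int (t+4) + -1)" using et by simp
  note k1 = key[OF supp_U supp_DDU gU gDDU[OF gU] p1 p2]
  note k2 = key[OF supp_DU supp_DU gDU[OF gU] gDU[OF gU] p1 p2]
  note k3 = key[OF supp_U supp_V gU gV[OF gU] p1 p2]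
  note R = R0[of "t+4" "-1"]
  note X0 = R[unfolded k1 k2 k3]
  note hisimps[simp] if_cong[cong]
  note X1 = X0[simplified, unfolded One_nat_def[symmetric]]
  note X = X1[unfolded s30 s32 s3m2 lev2_p2 lev2_m2]
  show ?thesis using X T2 T4 isq a11 lev2_0 by algebra
qed

lemma res: "U (Suc (Suc t)) 1 = 0 \<and> U (Suc (Suc t)) (-1) = 0"
proof -
  have f1: "4/9 * \<i> * c * \<Theta>\<^sup>2 * (- 1 - of_nat t - 2 * \<kappa>) * U (Suc (Suc t)) 1 + 16 * c^2 * of_real \<epsilon> * (acoef 1 1)^2 * U (Suc (Suc t)) (-1) = 0"
    using eq41 epsc_nz by simp
  have f2: "4/9 * \<i> * c * \<Theta>\<^sup>2 * (1 + of_nat t - 2 * \<kappa>) * U (Suc (Suc t)) (-1) + 16 * c^2 * of_real \<epsilon> * (acoef 1 (-1))^2 * U (Suc (Suc t)) 1 = 0"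
    using eq4m1 epsc_nz by simp
  have g1: "576 * c^4 * (of_nat t + 1)^2 * U (Suc (Suc t)) 1 = 0"
    using f1 f2 T2 a11 isq eps2 by algebra
  have g2: "576 * c^4 * (of_nat t + 1)^2 * U (Suc (Suc t)) (-1) = 0"
    using f1 f2 T2 a11 isq eps2 by algebra
  have nz: "(of_nat t + 1 :: complex) \<noteq> 0"
    by (metis of_nat_Suc of_nat_eq_0_iff add.commute nat.distinct(1))
  show ?thesis using g1 g2 nz c_nz by simp
qed

end
end

context setting begin

lemma good_mono: "good n' U \<Longrightarrow> n \<le> n' \<Longrightarrow> good n U"
  unfolding good_def by auto

lemma good2: "good 2 U"
  unfolding good_def
proof (intro allI impI)
  fix m i assume m: "m < (2::nat)" and o: "odd (int m + i)"
  show "U m i = 0"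
  proof (cases "m = 0")
    case True then show ?thesis using o U0 by auto
  next
    case False then have "m = 1" using m by simp
    then show ?thesis using o U1 by auto
  qed
qed

lemma good_step: assumes g: "good n U" and n2: "2 \<le> n" shows "good (Suc n) U"
proof -
  have lev: "U n j = 0" if o: "odd (int n + j)" for j
  proof (cases "j^2 = 1")
    case False then show ?thesis using level_nonres[OF g _ o] n2 by simp
  next
    case True
    then have j: "j = 1 \<or> j = -1"
      by (metis abs_power2 one_power2 power2_eq_iff)
    then have en: "even n" using o by auto
    then obtain t where t: "n = t + 2" "even t" using n2
      by (metis add.commute dvd_add_left_iff dvd_refl le_Suc_ex)
    have "U (Suc (Suc t)) 1 = 0 \<and> U (Suc (Suc t)) (-1) = 0"
      using res[OF t(2)] g t(1) by simp
    then show ?thesis using j t(1) by auto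
  qed
  show ?thesis unfolding good_def
  proof (intro allI impI)
    fix m i assume "m < Suc n" "odd (int m + i)"
    then show "U m i = 0" using goodD[OF g] lev by (cases "m = n") auto
  qed
qed

lemma good_all: "good n U"
proof -
  have "good n U" if "2 \<le> n" for n
    using that
  proof (induction n rule: nat_induct_at_least)
    case base then show ?case by (rule good2)
  next
    case (Suc n) then show ?case using good_step by simp
  qed
  then show ?thesis
    by (metis good_mono nat_le_linear)
qed

lemma parity_zero: assumes "odd (int n + j)" "\<bar>j\<bar> \<le> int n" shows "acoef n j = 0"
proof -
  have "U n j = 0" using goodD[OF good_all[of "Suc n"]] assms by simp
  then show ?thesis using assms c_nz by (simp add: U_def vser_def)
qed

end

theorem mainTheorem7:
  fixes \<epsilon> b :: real and a \<beta> \<Theta> \<kappa> :: complex and acoef :: "nat \<Rightarrow> int \<Rightarrow> complex"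
  assumes eps: "\<epsilon> = 1 \<or> \<epsilon> = -1"
    and b: "b \<noteq> 0"
    and beta: "\<beta> ^ 3 = of_real (\<epsilon> * b)"
    and Theta: "\<Theta>\<^sup>2 = 3 * of_real (sqrt 3) * \<beta>"
    and kappa: "\<bar>Re \<kappa>\<bar> < 1/2"
    and a00: "acoef 0 0 = 1"
    and a10: "acoef 1 0 = 0"
    and a11: "\<Theta>\<^sup>2 * acoef 1 1 * acoef 1 (-1) = - 3 * \<i> * \<kappa>"
    and formal: "\<forall>n j. PIII_residual \<epsilon> b a \<beta> \<kappa> \<Theta> acoef n j = 0"
  shows "(\<forall>n\<ge>1. acoef n (1 - int n) = 0 \<and> acoef n (int n - 1) = 0)
       \<and> (\<forall>j\<ge>1. acoef (2 * j) 1 = 0 \<and> acoef (2 * j) (-1) = 0)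
       \<and> (\<forall>j\<ge>1. A_gen \<Theta> acoef (2 * j - 1) = 0)"
proof -
  interpret S: setting \<epsilon> b a \<beta> \<Theta> \<kappa> acoef
    using eps b beta Theta a00 a10 a11 formal by unfold_locales auto
  have pz: "acoef n j = 0" if "odd (int n + j)" "\<bar>j\<bar> \<le> int n" for n j
    using S.parity_zero that by blast
  have A: "A_gen \<Theta> acoef (2 * j - 1) = 0" if j: "j \<ge> 1" for j :: nat
  proof (rule fps_ext)
    fix n
    have "(if (2 * j - 1 + 1) div 2 \<le> n then \<Theta> ^ n * acoef n (int (2 * j - 1) - int n) else 0) = 0"
    proof (cases "(2 * j - 1 + 1) div 2 \<le> n")
      case True
      then have jn: "j \<le> n" using j by simp
      have "acoef n (int (2 * j - 1) - int n) = 0"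
        by (rule pz) (use j jn in \<open>auto simp: of_nat_diff\<close>)
      then show ?thesis by simp
    qed simp
    then show "fps_nth (A_gen \<Theta> acoef (2 * j - 1)) n = fps_nth 0 n" unfolding A_gen_def by simp
  qed
  show ?thesis
  proof (intro conjI allI impI)
    fix n :: nat assume "1 \<le> n"
    then show "acoef n (1 - int n) = 0" "acoef n (int n - 1) = 0" by (auto intro!: pz)
  next
    fix j :: nat assume "1 \<le> j"
    then show "acoef (2 * j) 1 = 0" "acoef (2 * j) (-1) = 0" by (auto intro!: pz)
  next
    fix j :: nat assume "1 \<le> j"
    then show "A_gen \<Theta> acoef (2 * j - 1) = 0" by (rule A)
  qed
qed

end
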